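(* Let $m\ge 1$. In the chip-firing process on the self-loop graph beginning with $4m-1$ chips at site $0$ and run to completion, the number of firing moves at site $k$, for $-m\le k\le m$, is $(m-|k|)^2$.
   Context: The self-loop graph is the path graph on $\mathbb{Z}$ (each $i$ adjacent to $i\pm1$) with one self-loop at every vertex. A site can fire if it holds at least $3$ chips; firing sends one chip to each of the two neighboring sites and keeps one at the site. Running to completion means performing legal firing moves until every site has at most $2$ chips. *)

theory Defs
  imports Main
begin

type_synonym config = "int \<Rightarrow> nat"

text \<open>Firing site i: i loses 3 chips, keeps 1 via its self-loop (net -2),
and each neighbour i-1, i+1 gains one chip.\<close>
definition fire :: "config \<Rightarrow> int \<Rightarrow> config" where
  "fire c i = (\<lambda>j. if j = i then c j - 2
                   else if j = i - 1 \<or> j = i + 1 then c j + 1 else c j)"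

fun legal :: "config \<Rightarrow> int list \<Rightarrow> bool" where
  "legal c [] = True"
| "legal c (i # is) = (3 \<le> c i \<and> legal (fire c i) is)"

fun run :: "config \<Rightarrow> int list \<Rightarrow> config" where
  "run c [] = c"
| "run c (i # is) = run (fire c i) is"

definition stable :: "config \<Rightarrow> bool" where
  "stable c = (\<forall>j. c j \<le> 2)"

definition complete_run :: "config \<Rightarrow> int list \<Rightarrow> bool" where
  "complete_run c fs = (legal c fs \<and> stable (run c fs))"

definition point_config :: "nat \<Rightarrow> config" where
  "point_config N = (\<lambda>j. if j = 0 then N else 0)"

end

theory Submission imports Defs begin

lemma legal_append: "legal c (xs @ ys) = (legal c xs \<and> legal (run c xs) ys)"
  by (induction xs arbitrary: c) auto

lemma run_append: "run c (xs @ ys) = run (run c xs) ys"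
  by (induction xs arbitrary: c) auto

lemma run_formula:
  "legal c fs \<Longrightarrow> int (run c fs j) = int (c j) + int (count_list fs (j-1))
     + int (count_list fs (j+1)) - 2 * int (count_list fs j)"
proof (induction fs arbitrary: c)
  case Nil then show ?case by simp
next
  case (Cons i fs)
  then have c3: "3 \<le> c i" and lf: "legal (fire c i) fs" by auto
  have f: "int (fire c i j) = int (c j) + (if j = i - 1 \<or> j = i + 1 then 1 else 0)
            - (if j = i then 2 else 0)"
    using c3 by (auto simp: fire_def)
  show ?case using Cons.IH[OF lf] f by auto
qed

lemma least_action:
  assumes "legal c fs" "\<forall>j. v j \<ge> 0"
    "\<forall>j. int (c j) + v (j-1) + v (j+1) - 2 * v j \<le> 2"
  shows "\<forall>j. int (count_list fs j) \<le> v j"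
  using assms(1)
proof (induction fs rule: rev_induct)
  case Nil then show ?case using assms(2) by simp
next
  case (snoc i fs)
  then have lf: "legal c fs" and r3: "3 \<le> run c fs i" by (auto simp: legal_append)
  have IH: "\<forall>j. int (count_list fs j) \<le> v j" using snoc lf by blast
  have "int (count_list fs i) < v i"
  proof (rule ccontr)
    assume "\<not> ?thesis"
    then have e: "int (count_list fs i) = v i" using IH[rule_format, of i] by linarith
    have "int (run c fs i) \<le> 2"
      using run_formula[OF lf, of i] e IH[rule_format, of "i-1"] IH[rule_format, of "i+1"]
        assms(3)[rule_format, of i] by linarith
    then show False using r3 by linarith
  qed
  then show ?case using IH by auto
qed

lemma slope_nonpos:
  fixes e :: "nat \<Rightarrow> int"
  assumes z: "\<forall>n\<ge>m. e n = 0" and p: "\<forall>n. e n \<ge> 0"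
    and cv: "\<forall>i. 0<i \<and> i<m \<longrightarrow> 2*e i \<le> e (i-1) + e (i+1)"
  shows "\<forall>i. i + k = m - 1 \<longrightarrow> i < m \<longrightarrow> e (Suc i) \<le> e i"
proof (induction k)
  case 0
  show ?case
  proof (intro allI impI)
    fix i assume "i + 0 = m - 1" "i < m"
    then have "Suc i = m" by simp
    then show "e (Suc i) \<le> e i" using z p by (metis order_refl)
  qed
next
  case (Suc k)
  show ?case
  proof (intro allI impI)
    fix i assume a: "i + Suc k = m - 1" "i < m"
    then have "e (Suc (Suc i)) \<le> e (Suc i)" using Suc.IH by auto
    moreover have "2 * e (Suc i) \<le> e i + e (Suc (Suc i))" using cv a by (metis Suc_eq_plus1 add_diff_cancel_right' zero_less_Suc less_diff_conv add_Suc_right add.commute less_add_Suc1)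
    ultimately show "e (Suc i) \<le> e i" by linarith
  qed
qed

lemma mono_down:
  fixes e :: "nat \<Rightarrow> int"
  assumes z: "\<forall>n\<ge>m. e n = 0" and p: "\<forall>n. e n \<ge> 0"
    and cv: "\<forall>i. 0<i \<and> i<m \<longrightarrow> 2*e i \<le> e (i-1) + e (i+1)"
  shows "e i \<le> e 0"
proof -
  have s: "\<And>i. i < m \<Longrightarrow> e (Suc i) \<le> e i"
    using slope_nonpos[OF z p cv, of "m - 1 - _"] by (metis le_add_diff_inverse2 less_Suc_eq_le Suc_pred' gr_implies_not0 not_gr_zero diff_le_self le_diff_conv add.commute)
  have "i \<le> m \<Longrightarrow> e i \<le> e 0" for i
  proof (induction i)
    case 0 then show ?case by simp
  next
    case (Suc i) then show ?case using s[of i] by simp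
  qed
  moreover have "i > m \<Longrightarrow> e i \<le> e 0" using z p by (metis less_imp_le)
  ultimately show ?thesis by (meson not_le)
qed

lemma flat_zero:
  fixes e :: "nat \<Rightarrow> int"
  assumes z: "\<forall>n\<ge>m. e n = 0" and p: "\<forall>n. e n \<ge> 0"
    and cv: "\<forall>i. 0<i \<and> i<m \<longrightarrow> 2*e i \<le> e (i-1) + e (i+1)"
    and st: "e 0 \<le> e 1"
  shows "e 0 = 0"
proof -
  have sl: "i < m \<Longrightarrow> e 1 - e 0 \<le> e (Suc i) - e i" for i
  proof (induction i)
    case 0 then show ?case by simp
  next
    case (Suc i)
    then have "2 * e (Suc i) \<le> e i + e (Suc (Suc i))" using cv by force
    then show ?case using Suc by linarith
  qed
  have "i \<le> m \<Longrightarrow> e 0 \<le> e i" for i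
  proof (induction i)
    case 0 then show ?case by simp
  next
    case (Suc i) then show ?case using sl[of i] st by linarith
  qed
  then have "e 0 \<le> e m" by simp
  then show ?thesis using z p by (metis order_refl order_antisym)
qed


definition uu :: "nat \<Rightarrow> int \<Rightarrow> int" where
  "uu m j = (if \<bar>j\<bar> \<le> int m then (int m - \<bar>j\<bar>)^2 else 0)"

definition LL :: "nat \<Rightarrow> int \<Rightarrow> int" where
  "LL m j = (if j = 0 then 1 else if \<bar>j\<bar> < int m then 2 else if \<bar>j\<bar> = int m then 1 else 0)"

lemma lap_u:
  assumes "m \<ge> 1"
  shows "int (point_config (4*m-1) j) + uu m (j-1) + uu m (j+1) - 2 * uu m j = LL m j"
proof -
  define M where "M = int m"
  have M1: "M \<ge> 1" using assms M_def by simp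
  have c: "int (point_config (4*m-1) j) = (if j = 0 then 4*M-1 else 0)"
    using assms by (auto simp: point_config_def M_def)
  have u: "\<And>j. uu m j = (if \<bar>j\<bar> \<le> M then (M - \<bar>j\<bar>)^2 else 0)" by (simp add: uu_def M_def)
  have L: "LL m j = (if j = 0 then 1 else if \<bar>j\<bar> < M then 2 else if \<bar>j\<bar> = M then 1 else 0)"
    by (simp add: LL_def M_def)
  consider "j = 0" | "0 < j" "j < M" | "j = M" | "j = M + 1" | "j > M + 1"
    | "0 > j" "j > -M" | "j = -M" | "j = -M - 1" | "j < -M - 1" by linarith
  then have "(if j = 0 then 4*M-1 else 0) + uu m (j-1) + uu m (j+1) - 2 * uu m j
    = (if j = 0 then 1 else if \<bar>j\<bar> < M then 2 else if \<bar>j\<bar> = M then 1 else 0)"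
  proof cases
    case 1 then show ?thesis using M1 by (simp add: u power2_eq_square algebra_simps)
  next
    case 2 then show ?thesis using M1 by (simp add: u power2_eq_square algebra_simps)
  next
    case 3 then show ?thesis using M1 by (simp add: u power2_eq_square algebra_simps)
  next
    case 4 then show ?thesis using M1 by (simp add: u power2_eq_square algebra_simps)
  next
    case 5 then show ?thesis using M1 by (simp add: u power2_eq_square algebra_simps)
  next
    case 6 then show ?thesis using M1 by (simp add: u power2_eq_square algebra_simps)
  next
    case 7 then show ?thesis using M1 by (simp add: u power2_eq_square algebra_simps)
  next
    case 8 then show ?thesis using M1 by (simp add: u power2_eq_square algebra_simps)
  next
    case 9 then show ?thesis using M1 by (simp add: u power2_eq_square algebra_simps)
  qed
  then show ?thesis using c L by simp
qed


lemma LL_le: "LL m j \<le> 2" by (simp add: LL_def)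

theorem lemma3p9:
  fixes m :: nat
  assumes "m \<ge> 1"
  shows "(\<exists>fs. complete_run (point_config (4 * m - 1)) fs) \<and>
         (\<forall>fs k. complete_run (point_config (4 * m - 1)) fs \<longrightarrow>
                 - int m \<le> k \<longrightarrow> k \<le> int m \<longrightarrow>
                 count_list fs k = nat ((int m - \<bar>k\<bar>)^2))"
proof -
  define c where "c = point_config (4 * m - 1)"
  define M where "M = int m"
  have upos: "\<forall>j. uu m j \<ge> 0" by (simp add: uu_def)
  have ulap: "\<forall>j. int (c j) + uu m (j-1) + uu m (j+1) - 2 * uu m j \<le> 2"
    using lap_u[OF assms] LL_le c_def by metis
  have LA: "legal c fs \<Longrightarrow> \<forall>j. int (count_list fs j) \<le> uu m j" for fs
    using least_action[OF _ upos ulap] by blast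
  have bound: "legal c fs \<Longrightarrow> int (length fs) \<le> sum (uu m) {-M..M}" for fs
  proof -
    assume lf: "legal c fs"
    have sub: "set fs \<subseteq> {-M..M}"
    proof
      fix j assume "j \<in> set fs"
      then have "count_list fs j > 0" by (metis count_list_0_iff gr0I)
      then have "uu m j > 0" using LA[OF lf] by (metis of_nat_0_less_iff order_less_le_trans)
      then show "j \<in> {-M..M}" by (auto simp: uu_def M_def split: if_splits)
    qed
    have "int (length fs) = int (sum (count_list fs) {-M..M})"
      using sum_count_set[OF sub] by simp
    also have "\<dots> = (\<Sum>j\<in>{-M..M}. int (count_list fs j))" by simp
    also have "\<dots> \<le> sum (uu m) {-M..M}" using LA[OF lf] by (intro sum_mono) auto
    finally show ?thesis .
  qed
  have ex: "\<exists>fs. complete_run c fs"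
  proof (rule ccontr)
    assume nc: "\<not> ?thesis"
    have "\<exists>fs. legal c fs \<and> length fs = n" for n
    proof (induction n)
      case 0 then show ?case by (intro exI[of _ "[]"]) simp
    next
      case (Suc n)
      then obtain fs where fs: "legal c fs" "length fs = n" by blast
      then have "\<not> stable (run c fs)" using nc complete_run_def by blast
      then obtain j where "\<not> run c fs j \<le> 2" unfolding stable_def by blast
      then have "run c fs j \<ge> 3" by linarith
      then have "legal c (fs @ [j])" using fs by (simp add: legal_append)
      then show ?case using fs by (intro exI[of _ "fs @ [j]"]) simp
    qed
    then obtain fs where "legal c fs" "length fs = nat (sum (uu m) {-M..M}) + 1" by blast
    then have "int (nat (sum (uu m) {-M..M}) + 1) \<le> sum (uu m) {-M..M}" using bound by metis
    then show False by linarith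
  qed
  have cnt: "count_list fs k = nat ((int m - \<bar>k\<bar>)^2)"
    if cr: "complete_run c fs" and k: "- int m \<le> k" "k \<le> int m" for fs k
  proof -
    have lf: "legal c fs" and st: "\<forall>j. run c fs j \<le> 2"
      using cr by (auto simp: complete_run_def stable_def)
    define d where "d j = uu m j - int (count_list fs j)" for j
    have dpos: "\<forall>j. d j \<ge> 0" using LA[OF lf] by (simp add: d_def)
    have dz: "\<bar>j\<bar> \<ge> M \<Longrightarrow> d j = 0" for j
    proof -
      assume "\<bar>j\<bar> \<ge> M"
      then have "uu m j = 0" by (auto simp: uu_def M_def)
      then show ?thesis using dpos[rule_format, of j] unfolding d_def by simp
    qed
    have key: "d (j-1) + d (j+1) - 2 * d j \<ge> LL m j - 2" for j
    proof -
      have "int (run c fs j) \<le> 2" using st[rule_format, of j] by simp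
      then have "LL m j - 2 \<le> (uu m (j-1) - int (count_list fs (j-1))) + (uu m (j+1) - int (count_list fs (j+1))) - 2 * (uu m j - int (count_list fs j))"
        using run_formula[OF lf, of j] lap_u[OF assms, of j] unfolding c_def by (smt (verit))
      then show ?thesis by (simp add: d_def)
    qed
    define e1 where "e1 n = d (int n)" for n
    define e2 where "e2 n = d (- int n)" for n
    have z1: "\<forall>n\<ge>m. e1 n = 0" using dz by (simp add: e1_def M_def)
    have z2: "\<forall>n\<ge>m. e2 n = 0" using dz by (simp add: e2_def M_def)
    have p1: "\<forall>n. e1 n \<ge> 0" using dpos by (simp add: e1_def)
    have p2: "\<forall>n. e2 n \<ge> 0" using dpos by (simp add: e2_def)
    have cv1: "\<forall>i. 0<i \<and> i<m \<longrightarrow> 2*e1 i \<le> e1 (i-1) + e1 (i+1)"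
    proof (intro allI impI)
      fix i assume i: "0 < i \<and> i < m"
      have "LL m (int i) = 2" using i by (simp add: LL_def)
      moreover have "e1 (i-1) = d (int i - 1)" "e1 (i+1) = d (int i + 1)" "e1 i = d (int i)"
        using i unfolding e1_def by (rule_tac arg_cong[of _ _ d], simp add: of_nat_diff)+
      ultimately show "2*e1 i \<le> e1 (i-1) + e1 (i+1)" using key[of "int i"] by linarith
    qed
    have cv2: "\<forall>i. 0<i \<and> i<m \<longrightarrow> 2*e2 i \<le> e2 (i-1) + e2 (i+1)"
    proof (intro allI impI)
      fix i assume i: "0 < i \<and> i < m"
      have "LL m (- int i) = 2" using i by (simp add: LL_def)
      moreover have "e2 (i-1) = d (- int i + 1)" "e2 (i+1) = d (- int i - 1)" "e2 i = d (- int i)"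
        using i unfolding e2_def by (rule_tac arg_cong[of _ _ d], simp add: of_nat_diff)+
      ultimately show "2*e2 i \<le> e2 (i-1) + e2 (i+1)" using key[of "- int i"] by linarith
    qed
    have k0: "d (-1) + d 1 - 2 * d 0 \<ge> -1" using key[of 0] by (simp add: LL_def)
    have "e1 0 \<le> e1 1 \<or> e2 0 \<le> e2 1" using k0 by (simp add: e1_def e2_def, linarith)
    then have d0: "d 0 = 0"
      using flat_zero[OF z1 p1 cv1] flat_zero[OF z2 p2 cv2] by (auto simp: e1_def e2_def)
    have "d k \<le> 0"
    proof (cases "k \<ge> 0")
      case True
      then show ?thesis using mono_down[OF z1 p1 cv1, of "nat k"] d0 by (simp add: e1_def)
    next
      case False
      then show ?thesis using mono_down[OF z2 p2 cv2, of "nat (-k)"] d0 by (simp add: e2_def)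
    qed
    then have "d k = 0" using dpos by (meson order_antisym)
    moreover have "\<bar>k\<bar> \<le> int m" using k by simp
    ultimately have "int (count_list fs k) = (int m - \<bar>k\<bar>)^2" by (simp add: d_def uu_def)
    then show ?thesis by simp
  qed
  show ?thesis using ex cnt unfolding c_def by blast
qed

end
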